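(* Let $(\pi,T,\eta,\mu)$ be a symmetric random system (in particular $T$-invariant and time reversible). Then the Markov operator $P_{\eta,T}$ is self-adjoint on $L^2(X,\mu)$. In particular $P_{\eta,T^{-1}}=P_{\eta,T}$.
   Context: A measured fibration is a measurable map $\pi:\mathcal M\to X$ between Borel spaces together with a family $\eta=\{\eta_x\}_{x\in X}$ of probability measures on $\mathcal M$ with $\eta_x(\pi^{-1}(x))=1$ for every $x$, measurable in the sense that $x\mapsto\eta_x(f)=\int f\,d\eta_x$ is Borel for every Borel $f:\mathcal M\to[0,\infty]$. A random system $(\pi,T,\eta,\mu)$ consists of such a measured fibration, a measurable map $T:\mathcal M\to\mathcal M$, and a probability measure $\mu$ on $X$; $\mu\circ\eta$ is the probability measure on $\mathcal M$ with $(\mu\circ\eta)(f)=\int_X\eta_x(f)\,d\mu(x)$. The Markov operator is $(P_{\eta,T}f)(x)=\int_{\pi^{-1}(x)}f(\pi(T(\xi)))\,d\eta_x(\xi)$. The random system is $T$-invariant if $T$ is a measurable isomorphism and $\nu:=\mu\circ\eta$ satisfies $T_*\nu=\nu$. It is time reversible if there is a measurable isomorphism $\tilde J:\mathcal M\to\mathcal M$ mapping fibers of $\pi$ to fibers, with $\tilde J_*\nu=\nu$ and $T\circ\tilde J=\tilde J\circ T^{-1}$; $\tilde J$ induces $J:X\to X$ with $J\circ\pi=\pi\circ\tilde J$. An automorphism (symmetry) of the random system is a measurable isomorphism $\tilde S:\mathcal M\to\mathcal M$ with $T\circ\tilde S=\tilde S\circ T$, mapping fibers to fibers and with $\tilde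 S_*\nu=\nu$; it induces $S:X\to X$ with $S\circ\pi=\pi\circ\tilde S$. A $T$-invariant, time reversible random system with time-reversing map $\tilde J$ is called symmetric if there exists an automorphism $\tilde S$ whose induced map $S$ on $X$ coincides with the map $J$ induced by $\tilde J$. *)

theory Defs
  imports "HOL-Probability.Probability"
begin

text \<open>Measured fibration pi : M -> X with fiber measures eta.
  Borel spaces are modelled as measurable spaces in which singletons of X are measurable
  (so that fibers pi^-1(x) are measurable).\<close>
definition measured_fibration ::
  "'m measure \<Rightarrow> 'x measure \<Rightarrow> ('m \<Rightarrow> 'x) \<Rightarrow> ('x \<Rightarrow> 'm measure) \<Rightarrow> bool" where
  "measured_fibration Mm Xm \<pi> \<eta> \<longleftrightarrow>
     \<pi> \<in> measurable Mm Xm \<and>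
     (\<forall>x\<in>space Xm. {x} \<in> sets Xm) \<and>
     (\<forall>x\<in>space Xm. prob_space (\<eta> x) \<and> sets (\<eta> x) = sets Mm \<and>
                     emeasure (\<eta> x) (\<pi> -` {x} \<inter> space Mm) = 1) \<and>
     (\<forall>f :: 'm \<Rightarrow> ennreal. f \<in> borel_measurable Mm \<longrightarrow>
        (\<lambda>x. \<integral>\<^sup>+ \<xi>. f \<xi> \<partial>\<eta> x) \<in> borel_measurable Xm)"

definition random_system ::
  "'m measure \<Rightarrow> 'x measure \<Rightarrow> ('m \<Rightarrow> 'x) \<Rightarrow> ('m \<Rightarrow> 'm) \<Rightarrow> ('x \<Rightarrow> 'm measure) \<Rightarrow> 'x measure \<Rightarrow> bool" where
  "random_system Mm Xm \<pi> T \<eta> \<mu> \<longleftrightarrow>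
     measured_fibration Mm Xm \<pi> \<eta> \<and> T \<in> measurable Mm Mm \<and>
     prob_space \<mu> \<and> sets \<mu> = sets Xm"

definition comp_measure :: "'m measure \<Rightarrow> 'x measure \<Rightarrow> ('x \<Rightarrow> 'm measure) \<Rightarrow> 'm measure" where
  "comp_measure Mm \<mu> \<eta> = measure_of (space Mm) (sets Mm) (\<lambda>A. \<integral>\<^sup>+ x. emeasure (\<eta> x) A \<partial>\<mu>)"

definition markov_op :: "('x \<Rightarrow> 'm measure) \<Rightarrow> ('m \<Rightarrow> 'x) \<Rightarrow> ('m \<Rightarrow> 'm) \<Rightarrow> ('x \<Rightarrow> real) \<Rightarrow> 'x \<Rightarrow> real" where
  "markov_op \<eta> \<pi> T f x = (\<integral> \<xi>. f (\<pi> (T \<xi>)) \<partial>\<eta> x)"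

definition measurable_iso :: "'m measure \<Rightarrow> ('m \<Rightarrow> 'm) \<Rightarrow> bool" where
  "measurable_iso Mm f \<longleftrightarrow> f \<in> measurable Mm Mm \<and> bij_betw f (space Mm) (space Mm) \<and>
     the_inv_into (space Mm) f \<in> measurable Mm Mm"

definition induces :: "'m measure \<Rightarrow> ('m \<Rightarrow> 'x) \<Rightarrow> ('m \<Rightarrow> 'm) \<Rightarrow> ('x \<Rightarrow> 'x) \<Rightarrow> bool" where
  "induces Mm \<pi> St S \<longleftrightarrow> (\<forall>\<xi>\<in>space Mm. \<pi> (St \<xi>) = S (\<pi> \<xi>))"

definition T_invariant ::
  "'m measure \<Rightarrow> 'x measure \<Rightarrow> ('m \<Rightarrow> 'x) \<Rightarrow> ('m \<Rightarrow> 'm) \<Rightarrow> ('x \<Rightarrow> 'm measure) \<Rightarrow> 'x measure \<Rightarrow> bool" where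
  "T_invariant Mm Xm \<pi> T \<eta> \<mu> \<longleftrightarrow>
     random_system Mm Xm \<pi> T \<eta> \<mu> \<and> measurable_iso Mm T \<and>
     distr (comp_measure Mm \<mu> \<eta>) Mm T = comp_measure Mm \<mu> \<eta>"

definition time_reversing_map ::
  "'m measure \<Rightarrow> 'x measure \<Rightarrow> ('m \<Rightarrow> 'x) \<Rightarrow> ('m \<Rightarrow> 'm) \<Rightarrow> ('x \<Rightarrow> 'm measure) \<Rightarrow> 'x measure
   \<Rightarrow> ('m \<Rightarrow> 'm) \<Rightarrow> ('x \<Rightarrow> 'x) \<Rightarrow> bool" where
  "time_reversing_map Mm Xm \<pi> T \<eta> \<mu> Jt J \<longleftrightarrow>
     measurable_iso Mm Jt \<and> induces Mm \<pi> Jt J \<and>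
     distr (comp_measure Mm \<mu> \<eta>) Mm Jt = comp_measure Mm \<mu> \<eta> \<and>
     (\<forall>\<xi>\<in>space Mm. T (Jt \<xi>) = Jt (the_inv_into (space Mm) T \<xi>))"

definition automorphism ::
  "'m measure \<Rightarrow> 'x measure \<Rightarrow> ('m \<Rightarrow> 'x) \<Rightarrow> ('m \<Rightarrow> 'm) \<Rightarrow> ('x \<Rightarrow> 'm measure) \<Rightarrow> 'x measure
   \<Rightarrow> ('m \<Rightarrow> 'm) \<Rightarrow> ('x \<Rightarrow> 'x) \<Rightarrow> bool" where
  "automorphism Mm Xm \<pi> T \<eta> \<mu> St S \<longleftrightarrow>
     measurable_iso Mm St \<and> (\<forall>\<xi>\<in>space Mm. T (St \<xi>) = St (T \<xi>)) \<and> induces Mm \<pi> St S \<and>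
     distr (comp_measure Mm \<mu> \<eta>) Mm St = comp_measure Mm \<mu> \<eta>"

definition symmetric_random_system ::
  "'m measure \<Rightarrow> 'x measure \<Rightarrow> ('m \<Rightarrow> 'x) \<Rightarrow> ('m \<Rightarrow> 'm) \<Rightarrow> ('x \<Rightarrow> 'm measure) \<Rightarrow> 'x measure \<Rightarrow> bool" where
  "symmetric_random_system Mm Xm \<pi> T \<eta> \<mu> \<longleftrightarrow>
     T_invariant Mm Xm \<pi> T \<eta> \<mu> \<and>
     (\<exists>Jt J St S. time_reversing_map Mm Xm \<pi> T \<eta> \<mu> Jt J \<and>
                  automorphism Mm Xm \<pi> T \<eta> \<mu> St S \<and> (\<forall>x\<in>space Xm. S x = J x))"

end

theory Submission
  imports Defs
begin

lemma kernel_integrable: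
  fixes h :: "'b \<Rightarrow> real"
  assumes K[measurable]: "K \<in> measurable M (subprob_algebra N)"
    and h[measurable]: "h \<in> borel_measurable N"
    and int: "integrable (M \<bind> K) h"
  shows "AE x in M. integrable (K x) h" "integrable M (\<lambda>x. \<integral>y. h y \<partial>K x)"
proof -
  have fin: "(\<integral>\<^sup>+x. \<integral>\<^sup>+y. ennreal (norm (h y)) \<partial>K x \<partial>M) < \<infinity>"
  proof -
    have hn: "(\<lambda>y. ennreal (norm (h y))) \<in> borel_measurable N" by measurable
    have "(\<integral>\<^sup>+y. ennreal (norm (h y)) \<partial>(M \<bind> K)) = (\<integral>\<^sup>+x. \<integral>\<^sup>+y. ennreal (norm (h y)) \<partial>K x \<partial>M)"
      by (rule nn_integral_bind[OF hn K])
    moreover have "(\<integral>\<^sup>+y. ennreal (norm (h y)) \<partial>(M \<bind> K)) < \<infinity>"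
      using int by (simp only: integrable_iff_bounded)
    ultimately show ?thesis by simp
  qed
  have hn: "(\<lambda>y. ennreal (norm (h y))) \<in> borel_measurable N" by measurable
  have "AE x in M. (\<integral>\<^sup>+y. ennreal (norm (h y)) \<partial>K x) \<noteq> \<infinity>"
    by (rule nn_integral_PInf_AE[OF measurable_compose[OF K nn_integral_measurable_subprob_algebra[OF hn]]])
       (use fin in simp)
  then show "AE x in M. integrable (K x) h"
  proof (rule AE_mp, intro AE_I2 impI)
    fix x assume x: "x \<in> space M" and "(\<integral>\<^sup>+y. ennreal (norm (h y)) \<partial>K x) \<noteq> \<infinity>"
    moreover have sK: "sets (K x) = sets N" using K x by (rule sets_kernel)
    have hK: "h \<in> borel_measurable (K x)" unfolding measurable_cong_sets[OF sK refl] by (rule h)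
    ultimately show "integrable (K x) h" using hK
      unfolding integrable_iff_bounded by (simp add: less_top)
  qed
  show "integrable M (\<lambda>x. \<integral>y. h y \<partial>K x)"
    unfolding integrable_iff_bounded
  proof
    show "(\<lambda>x. \<integral>y. h y \<partial>K x) \<in> borel_measurable M"
      by (rule measurable_compose[OF K integral_measurable_subprob_algebra[OF h]])
    have "(\<integral>\<^sup>+x. ennreal (norm (\<integral>y. h y \<partial>K x)) \<partial>M) \<le> (\<integral>\<^sup>+x. \<integral>\<^sup>+y. ennreal (norm (h y)) \<partial>K x \<partial>M)"
    proof (rule nn_integral_mono)
      fix x show "ennreal (norm (\<integral>y. h y \<partial>K x)) \<le> (\<integral>\<^sup>+y. ennreal (norm (h y)) \<partial>K x)"
      proof (cases "integrable (K x) h")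
        case True then show ?thesis by (rule integral_norm_bound_ennreal)
      next
        case False then show ?thesis by (simp add: not_integrable_integral_eq)
      qed
    qed
    then show "(\<integral>\<^sup>+x. ennreal (norm (\<integral>y. h y \<partial>K x)) \<partial>M) < \<infinity>" using fin by (rule le_less_trans)
  qed
qed

lemma kernel_integral_nonneg:
  fixes h :: "'b \<Rightarrow> real"
  assumes K[measurable]: "K \<in> measurable M (subprob_algebra N)"
    and h[measurable]: "h \<in> borel_measurable N"
    and int: "integrable (M \<bind> K) h" and nn: "\<And>y. 0 \<le> h y" and ne: "space M \<noteq> {}"
  shows "(\<integral>y. h y \<partial>(M \<bind> K)) = (\<integral>x. \<integral>y. h y \<partial>K x \<partial>M)"
proof -
  have sK: "\<And>x. x \<in> space M \<Longrightarrow> sets (K x) = sets N"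
    using K by (rule sets_kernel)
  have hnm: "(\<lambda>y. ennreal (h y)) \<in> borel_measurable N" by measurable
  have hb: "h \<in> borel_measurable (M \<bind> K)"
    unfolding measurable_cong_sets[OF sets_bind_measurable[OF K ne] refl] by (rule h)
  have "(\<integral>y. h y \<partial>(M \<bind> K)) = enn2real (\<integral>\<^sup>+y. ennreal (h y) \<partial>(M \<bind> K))"
    by (rule integral_eq_nn_integral) (rule hb, rule AE_I2, rule nn)
  also have "enn2real (\<integral>\<^sup>+y. ennreal (h y) \<partial>(M \<bind> K)) = enn2real (\<integral>\<^sup>+x. \<integral>\<^sup>+y. ennreal (h y) \<partial>K x \<partial>M)"
    by (simp only: nn_integral_bind[OF hnm K])
  also have "(\<integral>\<^sup>+x. \<integral>\<^sup>+y. ennreal (h y) \<partial>K x \<partial>M) = (\<integral>\<^sup>+x. ennreal (\<integral>y. h y \<partial>K x) \<partial>M)"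
  proof (rule nn_integral_cong_AE)
    show "AE x in M. (\<integral>\<^sup>+y. ennreal (h y) \<partial>K x) = ennreal (\<integral>y. h y \<partial>K x)"
      using kernel_integrable(1)[OF K h int]
    proof (rule AE_mp, intro AE_I2 impI)
      fix x assume x: "x \<in> space M" and i: "integrable (K x) h"
      show "(\<integral>\<^sup>+y. ennreal (h y) \<partial>K x) = ennreal (\<integral>y. h y \<partial>K x)"
        by (rule nn_integral_eq_integral[OF i]) (rule AE_I2, rule nn)
    qed
  qed
  also have "enn2real (\<integral>\<^sup>+x. ennreal (\<integral>y. h y \<partial>K x) \<partial>M) = (\<integral>x. \<integral>y. h y \<partial>K x \<partial>M)"
    by (rule integral_eq_nn_integral[symmetric])
      (rule measurable_compose[OF K integral_measurable_subprob_algebra[OF h]],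
       rule AE_I2, rule Bochner_Integration.integral_nonneg, rule nn)
  finally show ?thesis .
qed

lemma kernel_integral:
  fixes h :: "'b \<Rightarrow> real"
  assumes K[measurable]: "K \<in> measurable M (subprob_algebra N)"
    and h[measurable]: "h \<in> borel_measurable N"
    and int: "integrable (M \<bind> K) h" and ne: "space M \<noteq> {}"
  shows "(\<integral>y. h y \<partial>(M \<bind> K)) = (\<integral>x. \<integral>y. h y \<partial>K x \<partial>M)"
proof -
  define hp where "hp y = max (h y) 0" for y
  define hn where "hn y = max (- h y) 0" for y
  have hpm[measurable]: "hp \<in> borel_measurable N" and hnm[measurable]: "hn \<in> borel_measurable N"
    unfolding hp_def hn_def by measurable
  have ip: "integrable (M \<bind> K) hp" unfolding hp_def by (rule integrable_max[OF int integrable_zero])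
  have in_: "integrable (M \<bind> K) hn" unfolding hn_def
    by (rule integrable_max[OF integrable_minus[OF int] integrable_zero])
  have m1: "(\<lambda>x. (\<integral>y. hp y \<partial>K x) - (\<integral>y. hn y \<partial>K x)) \<in> borel_measurable M"
    by (rule borel_measurable_diff[OF measurable_compose[OF K integral_measurable_subprob_algebra[OF hpm]]
          measurable_compose[OF K integral_measurable_subprob_algebra[OF hnm]]])
  have m2: "(\<lambda>x. (\<integral>y. h y \<partial>K x)) \<in> borel_measurable M"
    by (rule measurable_compose[OF K integral_measurable_subprob_algebra[OF h]])
  have eq: "\<And>y. h y = hp y - hn y" unfolding hp_def hn_def by auto
  have "(\<integral>y. h y \<partial>(M \<bind> K)) = (\<integral>y. hp y \<partial>(M \<bind> K)) - (\<integral>y. hn y \<partial>(M \<bind> K))"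
    unfolding eq by (rule Bochner_Integration.integral_diff[OF ip in_])
  also have "\<dots> = (\<integral>x. \<integral>y. hp y \<partial>K x \<partial>M) - (\<integral>x. \<integral>y. hn y \<partial>K x \<partial>M)"
  proof -
    have e1: "(\<integral>y. hp y \<partial>(M \<bind> K)) = (\<integral>x. \<integral>y. hp y \<partial>K x \<partial>M)"
      by (rule kernel_integral_nonneg[OF K hpm ip _ ne]) (simp add: hp_def)
    have e2: "(\<integral>y. hn y \<partial>(M \<bind> K)) = (\<integral>x. \<integral>y. hn y \<partial>K x \<partial>M)"
      by (rule kernel_integral_nonneg[OF K hnm in_ _ ne]) (simp add: hn_def)
    show ?thesis by (simp only: e1 e2)
  qed
  also have "\<dots> = (\<integral>x. (\<integral>y. hp y \<partial>K x) - (\<integral>y. hn y \<partial>K x) \<partial>M)"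
    by (rule Bochner_Integration.integral_diff[symmetric])
       (rule kernel_integrable(2)[OF K hpm ip], rule kernel_integrable(2)[OF K hnm in_])
  also have "\<dots> = (\<integral>x. \<integral>y. h y \<partial>K x \<partial>M)"
  proof (rule integral_cong_AE)
    show "AE x in M. (\<integral>y. hp y \<partial>K x) - (\<integral>y. hn y \<partial>K x) = (\<integral>y. h y \<partial>K x)"
      using kernel_integrable(1)[OF K h int]
    proof (rule AE_mp, intro AE_I2 impI)
      fix x assume "integrable (K x) h"
      then have a: "integrable (K x) hp" "integrable (K x) hn" unfolding hp_def hn_def
        by (rule integrable_max[OF _ integrable_zero], rule integrable_max[OF integrable_minus integrable_zero])
      have "(\<integral>y. h y \<partial>K x) = (\<integral>y. hp y - hn y \<partial>K x)" by (simp only: eq[symmetric])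
      also have "\<dots> = (\<integral>y. hp y \<partial>K x) - (\<integral>y. hn y \<partial>K x)"
        by (rule Bochner_Integration.integral_diff[OF a])
      finally show "(\<integral>y. hp y \<partial>K x) - (\<integral>y. hn y \<partial>K x) = (\<integral>y. h y \<partial>K x)" by simp
    qed
  qed (fact m1, fact m2)
  finally show ?thesis .
qed


lemma abs_mult_le_sq: "\<bar>(x::real) * y\<bar> \<le> x\<^sup>2 + y\<^sup>2"
proof -
  have "2 * \<bar>x\<bar> * \<bar>y\<bar> \<le> \<bar>x\<bar>\<^sup>2 + \<bar>y\<bar>\<^sup>2" by (rule sum_squares_bound)
  moreover have "0 \<le> \<bar>x\<bar> * \<bar>y\<bar>" by simp
  ultimately show ?thesis by (simp only: abs_mult power2_abs)
qed

lemma abs_le_1_sq: "\<bar>(x::real)\<bar> \<le> 1 + x\<^sup>2"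
proof -
  have "0 \<le> (\<bar>x\<bar> - 1)\<^sup>2" by simp
  then have "0 \<le> x\<^sup>2 + 1 - 2 * \<bar>x\<bar>" by (simp add: power2_diff power2_abs)
  moreover have "0 \<le> x\<^sup>2" by simp
  ultimately show ?thesis by linarith
qed

lemma abs_mult_sgn_le: "\<bar>(a::real) * sgn b\<bar> \<le> \<bar>a\<bar>"
  by (simp add: abs_mult abs_sgn_eq)

theorem proposition2p4:
  fixes Mm :: "'m measure" and Xm :: "'x measure" and \<pi> :: "'m \<Rightarrow> 'x"
    and T :: "'m \<Rightarrow> 'm" and \<eta> :: "'x \<Rightarrow> 'm measure" and \<mu> :: "'x measure"
  assumes "symmetric_random_system Mm Xm \<pi> T \<eta> \<mu>"
  shows "(\<forall>f g. f \<in> borel_measurable \<mu> \<longrightarrow> g \<in> borel_measurable \<mu> \<longrightarrow>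
            integrable \<mu> (\<lambda>x. (f x)\<^sup>2) \<longrightarrow> integrable \<mu> (\<lambda>x. (g x)\<^sup>2) \<longrightarrow>
            (\<integral>x. markov_op \<eta> \<pi> T f x * g x \<partial>\<mu>) = (\<integral>x. f x * markov_op \<eta> \<pi> T g x \<partial>\<mu>))
       \<and> (\<forall>f. f \<in> borel_measurable \<mu> \<longrightarrow> integrable \<mu> (\<lambda>x. (f x)\<^sup>2) \<longrightarrow>
            (AE x in \<mu>. markov_op \<eta> \<pi> (the_inv_into (space Mm) T) f x = markov_op \<eta> \<pi> T f x))"
proof -
  define Ti where "Ti = the_inv_into (space Mm) T"
  from assms obtain Jt J St S where
    TI: "T_invariant Mm Xm \<pi> T \<eta> \<mu>" and TR: "time_reversing_map Mm Xm \<pi> T \<eta> \<mu> Jt J"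
    and AU: "automorphism Mm Xm \<pi> T \<eta> \<mu> St S" and SJ: "\<forall>x\<in>space Xm. S x = J x"
    unfolding symmetric_random_system_def by blast
  have RS: "random_system Mm Xm \<pi> T \<eta> \<mu>" and isoT: "measurable_iso Mm T"
    and invT: "distr (comp_measure Mm \<mu> \<eta>) Mm T = comp_measure Mm \<mu> \<eta>"
    using TI unfolding T_invariant_def by auto
  have pim[measurable]: "\<pi> \<in> measurable Mm Xm" and sing: "\<And>x. x\<in>space Xm \<Longrightarrow> {x} \<in> sets Xm"
    and fibx: "\<And>x. x\<in>space Xm \<Longrightarrow> prob_space (\<eta> x) \<and> sets (\<eta> x) = sets Mm \<and>
                   emeasure (\<eta> x) (\<pi> -` {x} \<inter> space Mm) = 1"
    and nnm: "\<And>f::'m \<Rightarrow> ennreal. f \<in> borel_measurable Mm \<Longrightarrow> (\<lambda>x. \<integral>\<^sup>+\<xi>. f \<xi> \<partial>\<eta> x) \<in> borel_measurable Xm"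
    and Tm[measurable]: "T \<in> measurable Mm Mm" and pm: "prob_space \<mu>" and smu: "sets \<mu> = sets Xm"
    using RS unfolding random_system_def measured_fibration_def by auto
  interpret mu: prob_space \<mu> by (rule pm)
  have spmu: "space \<mu> = space Xm" using smu by (rule sets_eq_imp_space_eq)
  have mmu: "\<And>N. measurable \<mu> N = measurable Xm N" by (rule measurable_cong_sets[OF smu refl])
  have K[measurable]: "\<eta> \<in> measurable \<mu> (subprob_algebra Mm)"
  proof (rule measurable_subprob_algebra)
    fix a assume "a \<in> space \<mu>"
    then have "a \<in> space Xm" by (simp add: spmu)
    then show "subprob_space (\<eta> a)" "sets (\<eta> a) = sets Mm"
      using fibx by (auto intro: prob_space_imp_subprob_space)
  next
    fix A assume A: "A \<in> sets Mm"
    have "(\<lambda>x. \<integral>\<^sup>+\<xi>. indicator A \<xi> \<partial>\<eta> x) \<in> borel_measurable Xm" using A by (intro nnm) simp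
    then have m: "(\<lambda>x. \<integral>\<^sup>+\<xi>. indicator A \<xi> \<partial>\<eta> x) \<in> borel_measurable \<mu>" by (simp add: mmu)
    have "\<And>x. x \<in> space \<mu> \<Longrightarrow> (\<integral>\<^sup>+\<xi>. indicator A \<xi> \<partial>\<eta> x) = emeasure (\<eta> x) A"
    proof -
      fix x assume "x \<in> space \<mu>"
      then have "sets (\<eta> x) = sets Mm" using fibx spmu by auto
      then show "(\<integral>\<^sup>+\<xi>. indicator A \<xi> \<partial>\<eta> x) = emeasure (\<eta> x) A" using A by simp
    qed
    then show "(\<lambda>a. emeasure (\<eta> a) A) \<in> borel_measurable \<mu>"
      using measurable_cong[of \<mu> "\<lambda>x. \<integral>\<^sup>+\<xi>. indicator A \<xi> \<partial>\<eta> x" "\<lambda>a. emeasure (\<eta> a) A"] m by simp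
  qed
  define B where "B = \<mu> \<bind> \<eta>"
  have ne: "space \<mu> \<noteq> {}" by (rule mu.not_empty)
  have sB: "sets B = sets Mm" unfolding B_def by (rule sets_bind_measurable[OF K ne])
  have spB: "space B = space Mm" unfolding B_def by (rule space_bind_measurable[OF K ne])
  have mB: "\<And>N. measurable B N = measurable Mm N" by (rule measurable_cong_sets[OF sB refl])
  have compB: "comp_measure Mm \<mu> \<eta> = B"
  proof -
    have "comp_measure Mm \<mu> \<eta> = measure_of (space Mm) (sets Mm) (emeasure B)"
      unfolding comp_measure_def
      by (rule measure_of_eq[OF sets.space_closed]) (simp add: B_def emeasure_bind[OF ne K] sets.sigma_sets_eq)
    also have "\<dots> = B" using measure_of_of_measure[of B] sB spB by simp
    finally show ?thesis .
  qed
  interpret B: prob_space B unfolding B_def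
    by (rule mu.prob_space_bind[OF _ K]) (auto intro!: AE_I2 simp: spmu fibx)
  have invT': "distr B Mm T = B" using invT compB by simp
  have isoJ: "measurable_iso Mm Jt" and indJ: "\<And>\<xi>. \<xi> \<in> space Mm \<Longrightarrow> \<pi> (Jt \<xi>) = J (\<pi> \<xi>)"
    and invJ: "distr B Mm Jt = B" and revJ: "\<And>\<xi>. \<xi> \<in> space Mm \<Longrightarrow> T (Jt \<xi>) = Jt (Ti \<xi>)"
    using TR compB unfolding time_reversing_map_def induces_def Ti_def by auto
  have isoS: "measurable_iso Mm St" and commS: "\<And>\<xi>. \<xi> \<in> space Mm \<Longrightarrow> T (St \<xi>) = St (T \<xi>)"
    and indS: "\<And>\<xi>. \<xi> \<in> space Mm \<Longrightarrow> \<pi> (St \<xi>) = S (\<pi> \<xi>)" and invS: "distr B Mm St = B"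
    using AU compB unfolding automorphism_def induces_def by auto
  have Jm[measurable]: "Jt \<in> measurable Mm Mm" using isoJ unfolding measurable_iso_def by auto
  have Sm[measurable]: "St \<in> measurable Mm Mm" using isoS unfolding measurable_iso_def by auto
  have Tim[measurable]: "Ti \<in> measurable Mm Mm" and bijT: "bij_betw T (space Mm) (space Mm)"
    using isoT unfolding measurable_iso_def Ti_def by auto
  have injT: "inj_on T (space Mm)" using bijT by (rule bij_betw_imp_inj_on)
  have TiT: "\<And>\<xi>. \<xi> \<in> space Mm \<Longrightarrow> Ti (T \<xi>) = \<xi>"
    unfolding Ti_def by (rule the_inv_into_f_f[OF injT])
  have TiJ: "Ti (Jt \<xi>) = Jt (T \<xi>)" if \<xi>: "\<xi> \<in> space Mm" for \<xi>
  proof -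
    have T\<xi>: "T \<xi> \<in> space Mm" using Tm \<xi> by (rule measurable_space)
    have JT: "Jt (T \<xi>) \<in> space Mm" using Jm T\<xi> by (rule measurable_space)
    have "T (Jt (T \<xi>)) = Jt (Ti (T \<xi>))" using revJ[OF T\<xi>] .
    also have "\<dots> = Jt \<xi>" using TiT[OF \<xi>] by simp
    finally have "Ti (Jt \<xi>) = Ti (T (Jt (T \<xi>)))" by simp
    also have "\<dots> = Jt (T \<xi>)" using TiT[OF JT] .
    finally show ?thesis .
  qed
  have cv: "(\<integral>\<xi>. F \<xi> \<partial>B) = (\<integral>\<xi>. F (R \<xi>) \<partial>B)"
    if R: "R \<in> measurable Mm Mm" and inv: "distr B Mm R = B" and F: "F \<in> borel_measurable Mm" for R and F :: "'m \<Rightarrow> real"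
  proof -
    have "R \<in> measurable B Mm" using R by (simp add: mB)
    from integral_distr[OF this F] show ?thesis by (simp add: inv)
  qed
  have sym: "(\<integral>\<xi>. a (\<pi> (T \<xi>)) * b (\<pi> \<xi>) \<partial>B) = (\<integral>\<xi>. b (\<pi> (T \<xi>)) * a (\<pi> \<xi>) \<partial>B)"
    if am[measurable]: "a \<in> borel_measurable Xm" and bm[measurable]: "b \<in> borel_measurable Xm" for a b :: "'x \<Rightarrow> real"
  proof -
    define G0 where "G0 \<xi> = a (\<pi> \<xi>) * b (\<pi> (Ti \<xi>))" for \<xi>
    define G1 where "G1 \<xi> = b (\<pi> (T \<xi>)) * a (\<pi> \<xi>)" for \<xi>
    have G0m: "G0 \<in> borel_measurable Mm" unfolding G0_def
      by (intro borel_measurable_times measurable_compose[OF pim am]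
          measurable_compose[OF measurable_compose[OF Tim pim] bm])
    have G1m: "G1 \<in> borel_measurable Mm" unfolding G1_def by measurable
    have "(\<integral>\<xi>. a (\<pi> (T \<xi>)) * b (\<pi> \<xi>) \<partial>B) = (\<integral>\<xi>. G0 (T \<xi>) \<partial>B)"
      by (rule Bochner_Integration.integral_cong) (simp_all add: G0_def spB TiT)
    also have "\<dots> = (\<integral>\<xi>. G0 \<xi> \<partial>B)" by (rule cv[OF Tm invT' G0m, symmetric])
    also have "\<dots> = (\<integral>\<xi>. G0 (Jt \<xi>) \<partial>B)" by (rule cv[OF Jm invJ G0m])
    also have "\<dots> = (\<integral>\<xi>. a (J (\<pi> \<xi>)) * b (J (\<pi> (T \<xi>))) \<partial>B)"
    proof (rule Bochner_Integration.integral_cong)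
      fix \<xi> assume "\<xi> \<in> space B"
      then have \<xi>: "\<xi> \<in> space Mm" by (simp add: spB)
      have T\<xi>: "T \<xi> \<in> space Mm" using Tm \<xi> by (rule measurable_space)
      show "G0 (Jt \<xi>) = a (J (\<pi> \<xi>)) * b (J (\<pi> (T \<xi>)))"
        unfolding G0_def using indJ[OF \<xi>] indJ[OF T\<xi>] TiJ[OF \<xi>] by simp
    qed simp
    also have "\<dots> = (\<integral>\<xi>. G1 (St \<xi>) \<partial>B)"
    proof (rule Bochner_Integration.integral_cong)
      fix \<xi> assume "\<xi> \<in> space B"
      then have \<xi>: "\<xi> \<in> space Mm" by (simp add: spB)
      have T\<xi>: "T \<xi> \<in> space Mm" using Tm \<xi> by (rule measurable_space)
      have p1: "\<pi> \<xi> \<in> space Xm" using pim \<xi> by (rule measurable_space)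
      have p2: "\<pi> (T \<xi>) \<in> space Xm" using pim T\<xi> by (rule measurable_space)
      show "a (J (\<pi> \<xi>)) * b (J (\<pi> (T \<xi>))) = G1 (St \<xi>)"
        unfolding G1_def using commS[OF \<xi>] indS[OF \<xi>] indS[OF T\<xi>] SJ p1 p2 by simp
    qed simp
    also have "\<dots> = (\<integral>\<xi>. G1 \<xi> \<partial>B)" by (rule cv[OF Sm invS G1m, symmetric])
    finally show ?thesis unfolding G1_def .
  qed
  have fibAE: "AE \<xi> in \<eta> x. \<pi> \<xi> = x" if x: "x \<in> space Xm" for x
  proof -
    interpret ex: prob_space "\<eta> x" using fibx[OF x] by auto
    have se: "sets (\<eta> x) = sets Mm" using fibx[OF x] by auto
    have F: "\<pi> -` {x} \<inter> space Mm \<in> sets Mm" using measurable_sets[OF pim sing[OF x]] .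
    have "AE \<xi> in \<eta> x. \<xi> \<in> \<pi> -` {x} \<inter> space Mm"
      using F fibx[OF x] by (subst ex.AE_in_set_eq_1) (simp_all add: se ex.emeasure_eq_measure)
    then show ?thesis by eventually_elim simp
  qed
  have pimB[measurable]: "\<pi> \<in> measurable B \<mu>" by (simp add: mB measurable_cong_sets[OF refl smu])
  have dpi: "distr B \<mu> \<pi> = \<mu>"
  proof (rule measure_eqI)
    show "sets (distr B \<mu> \<pi>) = sets \<mu>" by simp
  next
    fix A assume A: "A \<in> sets (distr B \<mu> \<pi>)"
    then have A': "A \<in> sets Xm" by (simp add: smu)
    have PA: "\<pi> -` A \<inter> space Mm \<in> sets Mm" using measurable_sets[OF pim A'] .
    have "emeasure (distr B \<mu> \<pi>) A = emeasure B (\<pi> -` A \<inter> space B)"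
      using A by (simp add: emeasure_distr)
    also have "\<dots> = (\<integral>\<^sup>+x. emeasure (\<eta> x) (\<pi> -` A \<inter> space Mm) \<partial>\<mu>)"
      unfolding B_def spB[unfolded B_def] using PA by (rule emeasure_bind[OF ne K])
    also have "\<dots> = (\<integral>\<^sup>+x. indicator A x \<partial>\<mu>)"
    proof (rule nn_integral_cong)
      fix x assume "x \<in> space \<mu>"
      then have x: "x \<in> space Xm" by (simp add: spmu)
      interpret ex: prob_space "\<eta> x" using fibx[OF x] by auto
      have se: "sets (\<eta> x) = sets Mm" using fibx[OF x] by auto
      have spe: "space (\<eta> x) = space Mm" using se by (rule sets_eq_imp_space_eq)
      have "emeasure (\<eta> x) (\<pi> -` A \<inter> space Mm) = (\<integral>\<^sup>+\<xi>. indicator (\<pi> -` A \<inter> space Mm) \<xi> \<partial>\<eta> x)"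
        using PA se by simp
      also have "\<dots> = (\<integral>\<^sup>+\<xi>. indicator A x \<partial>\<eta> x)"
      proof (rule nn_integral_cong_AE)
        show "AE \<xi> in \<eta> x. indicator (\<pi> -` A \<inter> space Mm) \<xi> = (indicator A x :: ennreal)"
          using fibAE[OF x]
        proof (rule AE_mp, intro AE_I2 impI)
          fix \<xi> assume "\<xi> \<in> space (\<eta> x)" "\<pi> \<xi> = x"
          then show "indicator (\<pi> -` A \<inter> space Mm) \<xi> = (indicator A x :: ennreal)"
            using spe by (simp add: indicator_def)
        qed
      qed
      also have "\<dots> = indicator A x" by (simp add: ex.emeasure_space_1)
      finally show "emeasure (\<eta> x) (\<pi> -` A \<inter> space Mm) = indicator A x" .
    qed
    also have "\<dots> = emeasure \<mu> A" using A by simp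
    finally show "emeasure (distr B \<mu> \<pi>) A = emeasure \<mu> A" .
  qed
  have intpi: "integrable B (\<lambda>\<xi>. a (\<pi> \<xi>))" if "a \<in> borel_measurable \<mu>" "integrable \<mu> a" for a :: "'x \<Rightarrow> real"
    using integrable_distr_eq[OF pimB that(1)] that(2) dpi by simp
  have intT: "integrable B (\<lambda>\<xi>. F (T \<xi>))" if "F \<in> borel_measurable Mm" "integrable B F" for F :: "'m \<Rightarrow> real"
    using integrable_distr_eq[of T B Mm F] that invT' by (simp add: mB)
  have intTi: "integrable B (\<lambda>\<xi>. F (Ti \<xi>))" if Fm[measurable]: "F \<in> borel_measurable Mm" and Fi: "integrable B F" for F :: "'m \<Rightarrow> real"
  proof -
    have "integrable (distr B Mm T) (\<lambda>\<xi>. F (Ti \<xi>)) \<longleftrightarrow> integrable B (\<lambda>\<xi>. F (Ti (T \<xi>)))"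
      by (rule integrable_distr_eq) (simp_all add: mB)
    also have "\<dots> \<longleftrightarrow> integrable B F"
      by (rule Bochner_Integration.integrable_cong) (simp_all add: spB TiT)
    finally show ?thesis using Fi invT' by simp
  qed
  have prod: "integrable B (\<lambda>\<xi>. u \<xi> * v \<xi>)"
    if "u \<in> borel_measurable Mm" "v \<in> borel_measurable Mm"
       "integrable B (\<lambda>\<xi>. (u \<xi>)\<^sup>2)" "integrable B (\<lambda>\<xi>. (v \<xi>)\<^sup>2)" for u v :: "'m \<Rightarrow> real"
  proof (rule Bochner_Integration.integrable_bound)
    show "integrable B (\<lambda>\<xi>. (u \<xi>)\<^sup>2 + (v \<xi>)\<^sup>2)" using that by simp
    show "(\<lambda>\<xi>. u \<xi> * v \<xi>) \<in> borel_measurable B" using that by (simp add: mB)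
    show "AE \<xi> in B. norm (u \<xi> * v \<xi>) \<le> norm ((u \<xi>)\<^sup>2 + (v \<xi>)\<^sup>2)"
      by (intro AE_I2) (simp add: abs_mult_le_sq)
  qed
  have l2: "integrable B (\<lambda>\<xi>. (a (\<pi> \<xi>))\<^sup>2) \<and> integrable B (\<lambda>\<xi>. (a (\<pi> (T \<xi>)))\<^sup>2) \<and>
            integrable B (\<lambda>\<xi>. (a (\<pi> (Ti \<xi>)))\<^sup>2)"
    if am[measurable]: "a \<in> borel_measurable Xm" and ai: "integrable \<mu> (\<lambda>x. (a x)\<^sup>2)" for a :: "'x \<Rightarrow> real"
  proof -
    have 1: "integrable B (\<lambda>\<xi>. (a (\<pi> \<xi>))\<^sup>2)" using intpi[of "\<lambda>x. (a x)\<^sup>2"] ai by (simp add: mmu)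
    have m: "(\<lambda>\<xi>. (a (\<pi> \<xi>))\<^sup>2) \<in> borel_measurable Mm" by measurable
    show ?thesis using 1 intT[OF m 1] intTi[OF m 1] by simp
  qed
  have pair: "(\<integral>x. markov_op \<eta> \<pi> R a x * b x \<partial>\<mu>) = (\<integral>\<xi>. a (\<pi> (R \<xi>)) * b (\<pi> \<xi>) \<partial>B)"
    if Rm[measurable]: "R \<in> measurable Mm Mm" and am[measurable]: "a \<in> borel_measurable Xm"
      and bm[measurable]: "b \<in> borel_measurable Xm"
      and hi: "integrable B (\<lambda>\<xi>. a (\<pi> (R \<xi>)) * b (\<pi> \<xi>))" for R and a b :: "'x \<Rightarrow> real"
  proof -
    have hm: "(\<lambda>\<xi>. a (\<pi> (R \<xi>)) * b (\<pi> \<xi>)) \<in> borel_measurable Mm" by measurable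
    have "(\<integral>\<xi>. a (\<pi> (R \<xi>)) * b (\<pi> \<xi>) \<partial>B) = (\<integral>x. \<integral>\<xi>. a (\<pi> (R \<xi>)) * b (\<pi> \<xi>) \<partial>\<eta> x \<partial>\<mu>)"
      using kernel_integral[OF K hm _ ne] hi unfolding B_def by simp
    also have "\<dots> = (\<integral>x. markov_op \<eta> \<pi> R a x * b x \<partial>\<mu>)"
    proof (rule Bochner_Integration.integral_cong)
      fix x assume "x \<in> space \<mu>"
      then have x: "x \<in> space Xm" by (simp add: spmu)
      have se: "sets (\<eta> x) = sets Mm" using fibx[OF x] by auto
      have "(\<integral>\<xi>. a (\<pi> (R \<xi>)) * b (\<pi> \<xi>) \<partial>\<eta> x) = (\<integral>\<xi>. a (\<pi> (R \<xi>)) * b x \<partial>\<eta> x)"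
        by (rule integral_cong_AE) (simp_all add: measurable_cong_sets[OF se refl] AE_mp[OF fibAE[OF x] AE_I2])
      then show "(\<integral>\<xi>. a (\<pi> (R \<xi>)) * b (\<pi> \<xi>) \<partial>\<eta> x) = markov_op \<eta> \<pi> R a x * b x"
        by (simp add: markov_op_def)
    qed simp
    finally show ?thesis by simp
  qed

  show ?thesis
  proof (intro conjI allI impI)
    fix f g :: "'x \<Rightarrow> real"
    assume fm: "f \<in> borel_measurable \<mu>" and gm: "g \<in> borel_measurable \<mu>"
      and fi: "integrable \<mu> (\<lambda>x. (f x)\<^sup>2)" and gi: "integrable \<mu> (\<lambda>x. (g x)\<^sup>2)"
    have fX[measurable]: "f \<in> borel_measurable Xm" using fm by (simp add: mmu)
    have gX[measurable]: "g \<in> borel_measurable Xm" using gm by (simp add: mmu)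
    note l2f = l2[OF fX fi] and l2g = l2[OF gX gi]
    have i1: "integrable B (\<lambda>\<xi>. f (\<pi> (T \<xi>)) * g (\<pi> \<xi>))"
      by (rule prod) (use l2f l2g in simp_all)
    have i2: "integrable B (\<lambda>\<xi>. g (\<pi> (T \<xi>)) * f (\<pi> \<xi>))"
      by (rule prod) (use l2f l2g in simp_all)
    have "(\<integral>x. markov_op \<eta> \<pi> T f x * g x \<partial>\<mu>) = (\<integral>\<xi>. f (\<pi> (T \<xi>)) * g (\<pi> \<xi>) \<partial>B)"
      by (rule pair[OF Tm fX gX i1])
    also have "\<dots> = (\<integral>\<xi>. g (\<pi> (T \<xi>)) * f (\<pi> \<xi>) \<partial>B)" by (rule sym[OF fX gX])
    also have "\<dots> = (\<integral>x. markov_op \<eta> \<pi> T g x * f x \<partial>\<mu>)" by (rule pair[OF Tm gX fX i2, symmetric])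
    also have "\<dots> = (\<integral>x. f x * markov_op \<eta> \<pi> T g x \<partial>\<mu>)" by (simp add: mult.commute)
    finally show "(\<integral>x. markov_op \<eta> \<pi> T f x * g x \<partial>\<mu>) = (\<integral>x. f x * markov_op \<eta> \<pi> T g x \<partial>\<mu>)" .
  next
    fix g :: "'x \<Rightarrow> real"
    assume gm: "g \<in> borel_measurable \<mu>" and gi: "integrable \<mu> (\<lambda>x. (g x)\<^sup>2)"
    have gX[measurable]: "g \<in> borel_measurable Xm" using gm by (simp add: mmu)
    note l2g = l2[OF gX gi]
    define P where "P x = markov_op \<eta> \<pi> T g x" for x
    define Pi where "Pi x = markov_op \<eta> \<pi> Ti g x" for x
    define D where "D x = Pi x - P x" for x
    define s where "s x = sgn (D x)" for x
    have Pm: "(\<lambda>x. markov_op \<eta> \<pi> R g x) \<in> borel_measurable \<mu>" if [measurable]: "R \<in> measurable Mm Mm" for R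
      unfolding markov_op_def by (rule measurable_compose[OF K integral_measurable_subprob_algebra]) measurable
    have PmT[measurable]: "P \<in> borel_measurable \<mu>" unfolding P_def using Pm[OF Tm] .
    have PmTi[measurable]: "Pi \<in> borel_measurable \<mu>" unfolding Pi_def using Pm[OF Tim] .
    have sm[measurable]: "s \<in> borel_measurable \<mu>" unfolding s_def D_def by measurable
    have sX[measurable]: "s \<in> borel_measurable Xm" using sm by (simp add: mmu)
    have g1: "integrable \<mu> g"
    proof (rule Bochner_Integration.integrable_bound)
      show "integrable \<mu> (\<lambda>x. 1 + (g x)\<^sup>2)" using gi by simp
      show "AE x in \<mu>. norm (g x) \<le> norm (1 + (g x)\<^sup>2)"
      proof (intro AE_I2)
        fix x
        have "\<bar>g x\<bar> \<le> 1 + (g x)\<^sup>2" by (rule abs_le_1_sq)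
        also have "\<dots> \<le> \<bar>1 + (g x)\<^sup>2\<bar>" by (rule abs_ge_self)
        finally show "norm (g x) \<le> norm (1 + (g x)\<^sup>2)" unfolding real_norm_def .
      qed
    qed (rule gm)
    have gB: "integrable B (\<lambda>\<xi>. g (\<pi> \<xi>))" by (rule intpi[OF gm g1])
    have gBm: "(\<lambda>\<xi>. g (\<pi> \<xi>)) \<in> borel_measurable Mm" by measurable
    have hT: "integrable B (\<lambda>\<xi>. g (\<pi> (T \<xi>)))" by (rule intT[OF gBm gB])
    have hTi: "integrable B (\<lambda>\<xi>. g (\<pi> (Ti \<xi>)))" by (rule intTi[OF gBm gB])
    have Pint: "integrable \<mu> P" unfolding P_def markov_op_def
      using kernel_integrable(2)[OF K _ hT[unfolded B_def]] by simp
    have Piint: "integrable \<mu> Pi" unfolding Pi_def markov_op_def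
      using kernel_integrable(2)[OF K _ hTi[unfolded B_def]] by simp
    have s2: "integrable \<mu> (\<lambda>x. (s x)\<^sup>2)"
    proof (rule Bochner_Integration.integrable_bound)
      show "integrable \<mu> (\<lambda>x. 1::real)" by simp
      show "AE x in \<mu>. norm ((s x)\<^sup>2) \<le> norm (1::real)"
        by (intro AE_I2) (simp add: s_def power2_eq_square abs_mult abs_sgn_eq)
    qed measurable
    note l2s = l2[OF sX s2]
    have iTi: "integrable B (\<lambda>\<xi>. g (\<pi> (Ti \<xi>)) * s (\<pi> \<xi>))"
      by (rule prod) (use l2g l2s in simp_all)
    have iT: "integrable B (\<lambda>\<xi>. g (\<pi> (T \<xi>)) * s (\<pi> \<xi>))"
      by (rule prod) (use l2g l2s in simp_all)
    have Hm: "(\<lambda>\<xi>. g (\<pi> (Ti \<xi>)) * s (\<pi> \<xi>)) \<in> borel_measurable Mm"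
      by (intro borel_measurable_times measurable_compose[OF pim sX]
          measurable_compose[OF measurable_compose[OF Tim pim] gX])
    have "(\<integral>x. Pi x * s x \<partial>\<mu>) = (\<integral>\<xi>. g (\<pi> (Ti \<xi>)) * s (\<pi> \<xi>) \<partial>B)"
      unfolding Pi_def by (rule pair[OF Tim gX sX iTi])
    also have "\<dots> = (\<integral>\<xi>. g (\<pi> (Ti (T \<xi>))) * s (\<pi> (T \<xi>)) \<partial>B)"
      by (rule cv[OF Tm invT' Hm])
    also have "\<dots> = (\<integral>\<xi>. s (\<pi> (T \<xi>)) * g (\<pi> \<xi>) \<partial>B)"
      by (rule Bochner_Integration.integral_cong) (simp_all add: spB TiT mult.commute)
    also have "\<dots> = (\<integral>\<xi>. g (\<pi> (T \<xi>)) * s (\<pi> \<xi>) \<partial>B)" by (rule sym[OF sX gX])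
    also have "\<dots> = (\<integral>x. P x * s x \<partial>\<mu>)"
      unfolding P_def by (rule pair[OF Tm gX sX iT, symmetric])
    finally have eq: "(\<integral>x. Pi x * s x \<partial>\<mu>) = (\<integral>x. P x * s x \<partial>\<mu>)" .
    have iPis: "integrable \<mu> (\<lambda>x. Pi x * s x)"
      by (rule Bochner_Integration.integrable_bound[OF Piint])
         (simp, intro AE_I2, simp add: s_def abs_mult_sgn_le)
    have iPs: "integrable \<mu> (\<lambda>x. P x * s x)"
      by (rule Bochner_Integration.integrable_bound[OF Pint])
         (simp, intro AE_I2, simp add: s_def abs_mult_sgn_le)
    have "(\<integral>x. \<bar>D x\<bar> \<partial>\<mu>) = (\<integral>x. Pi x * s x - P x * s x \<partial>\<mu>)"
    proof (rule Bochner_Integration.integral_cong)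
      fix x
      have "\<bar>D x\<bar> = D x * sgn (D x)" by (rule abs_sgn)
      then show "\<bar>D x\<bar> = Pi x * s x - P x * s x" by (simp only: s_def D_def left_diff_distrib)
    qed simp
    also have "\<dots> = 0" using eq by (simp add: Bochner_Integration.integral_diff[OF iPis iPs])
    finally have "(\<integral>x. \<bar>D x\<bar> \<partial>\<mu>) = 0" .
    moreover have "integrable \<mu> (\<lambda>x. \<bar>D x\<bar>)" unfolding D_def using Piint Pint by simp
    ultimately have "AE x in \<mu>. \<bar>D x\<bar> = 0"
      using integral_nonneg_eq_0_iff_AE[of \<mu> "\<lambda>x. \<bar>D x\<bar>"] by simp
    then show "AE x in \<mu>. markov_op \<eta> \<pi> (the_inv_into (space Mm) T) g x = markov_op \<eta> \<pi> T g x"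
      by eventually_elim (simp add: D_def P_def Pi_def Ti_def)
  qed
qed
end
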